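(* There is an open set $U\subseteq2^\omega$ with $\Phi(U)=U$ such that its frontier $\mathrm{Fr}\,U=\mathrm{Cl}\,U\setminus\mathrm{Int}\,U$ has positive measure.
   Context: $2^\omega$ is the Cantor space; $N_s=\{x:s\subset x\}$; $\mu$ the coin-tossing measure with $\mu(N_s)=2^{-\mathrm{lh}(s)}$. For measurable $A$, $\Phi(A)=\{x:\lim_n\mu(A\cap N_{x\restriction n})/\mu(N_{x\restriction n})=1\}$. *)

theory Defs
  imports "HOL-Probability.Probability"
begin

text \<open>Cantor space is the type nat => bool with its product topology
  (library instance). The coin-tossing measure is the infinite product of fair
  Bernoulli measures.\<close>

definition cantor_mu :: "(nat \<Rightarrow> bool) measure" where
  "cantor_mu = PiM UNIV (\<lambda>_. measure_pmf (bernoulli_pmf (1/2)))"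

definition cyl :: "bool list \<Rightarrow> (nat \<Rightarrow> bool) set" where
  "cyl s = {x. \<forall>i < length s. x i = s ! i}"

definition restr :: "(nat \<Rightarrow> bool) \<Rightarrow> nat \<Rightarrow> bool list" where
  "restr x n = map x [0..<n]"

definition Phi :: "(nat \<Rightarrow> bool) set \<Rightarrow> (nat \<Rightarrow> bool) set" where
  "Phi A = {x. (\<lambda>n. measure cantor_mu (A \<inter> cyl (restr x n)) / measure cantor_mu (cyl (restr x n)))
                 \<longlonglongrightarrow> 1}"

end

theory Submission imports Defs begin

abbreviation "Mb \<equiv> measure_pmf (bernoulli_pmf (1/2::real))"

lemma fix_eq:
  "{x::nat\<Rightarrow>bool. \<forall>i\<in>I. x i = v i} = prod_emb UNIV (\<lambda>_. Mb) I (Pi\<^sub>E I (\<lambda>i. {v i}))"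
  unfolding prod_emb_def
proof (intro set_eqI iffI)
  fix x assume "x \<in> {x::nat\<Rightarrow>bool. \<forall>i\<in>I. x i = v i}"
  then show "x \<in> (\<lambda>x. restrict x I) -` (Pi\<^sub>E I (\<lambda>i. {v i})) \<inter> Pi\<^sub>E UNIV (\<lambda>i. space Mb)"
    by (simp add: PiE_iff)
next
  fix x assume "x \<in> (\<lambda>x. restrict x I) -` (Pi\<^sub>E I (\<lambda>i. {v i})) \<inter> Pi\<^sub>E UNIV (\<lambda>i. space Mb)"
  then show "x \<in> {x::nat\<Rightarrow>bool. \<forall>i\<in>I. x i = v i}"
    by (simp add: PiE_iff)
qed

lemma fix_sets: "finite I \<Longrightarrow> {x::nat\<Rightarrow>bool. \<forall>i\<in>I. x i = v i} \<in> sets cantor_mu"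
  unfolding fix_eq cantor_mu_def by (rule sets_PiM_I) auto

lemma fix_meas: assumes "finite I"
  shows "measure cantor_mu {x::nat\<Rightarrow>bool. \<forall>i\<in>I. x i = v i} = (1/2) ^ card I"
proof -
  have "emeasure cantor_mu {x::nat\<Rightarrow>bool. \<forall>i\<in>I. x i = v i} = (\<Prod>i\<in>I. emeasure Mb {v i})"
    unfolding fix_eq cantor_mu_def
    by (rule emeasure_PiM_emb) (auto simp: assms prob_space_measure_pmf)
  also have "\<dots> = (\<Prod>i\<in>I. ennreal (1/2))"
    apply (intro prod.cong refl)
    subgoal for i by (cases "v i") (simp_all add: emeasure_pmf_single)
    done
  also have "\<dots> = ennreal (\<Prod>i\<in>I. 1/2)"
    by (subst prod_ennreal) auto
  also have "\<dots> = ennreal ((1/2)^card I)"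
    by simp
  finally show ?thesis unfolding measure_def by simp
qed

lemma prob_cantor: "prob_space cantor_mu"
  unfolding cantor_mu_def by (intro prob_space_PiM) (simp add: prob_space_measure_pmf)

lemma space_cantor: "space cantor_mu = UNIV"
  unfolding cantor_mu_def by (simp add: space_PiM)

definition blk :: "nat \<Rightarrow> nat set" where "blk j = {j^2..<(Suc j)^2}"
definition Ab :: "nat \<Rightarrow> (nat\<Rightarrow>bool) set" where "Ab j = {x. \<forall>i\<in>blk j. x i = False}"
definition Uc :: "(nat\<Rightarrow>bool) set" where "Uc = (\<Union>j. Ab j)"

lemma card_blk: "card (blk j) = 2*j+1"
  by (simp add: blk_def power2_eq_square)

lemma blk_lt: "i \<in> blk j \<Longrightarrow> i < (Suc j)^2" by (simp add: blk_def)
lemma blk_ge: "i \<in> blk j \<Longrightarrow> j^2 \<le> i" by (simp add: blk_def)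
lemma sq_mono: "(a::nat) \<le> b \<Longrightarrow> a^2 \<le> b^2" by (rule power_mono) auto
lemma le_sq: "(a::nat) \<le> a^2" by (simp add: power2_eq_square)

lemma Ab_sets: "Ab j \<in> sets cantor_mu"
  unfolding Ab_def using fix_sets[of "blk j" "\<lambda>_. False"] by (simp add: blk_def)

lemma Ab_meas: "measure cantor_mu (Ab j) = (1/2)^(2*j+1)"
proof -
  have "finite (blk j)" by (simp add: blk_def)
  from fix_meas[OF this, where v="\<lambda>_. False"] show ?thesis unfolding Ab_def by (simp add: card_blk)
qed

lemma geo: "summable (\<lambda>j. (1/2::real)^(2*j+1))" "(\<Sum>j. (1/2::real)^(2*j+1)) = 2/3"
proof -
  have e: "(\<lambda>j. (1/2::real)^(2*j+1)) = (\<lambda>j. (1/2) * (1/4)^j)"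
    by (auto simp: power_mult power_add power2_eq_square)
  show "summable (\<lambda>j. (1/2::real)^(2*j+1))" unfolding e
    by (intro summable_mult summable_geometric) simp
  show "(\<Sum>j. (1/2::real)^(2*j+1)) = 2/3" unfolding e
    by (subst suminf_mult) (auto intro: summable_geometric simp: suminf_geometric)
qed

lemma Uc_sets: "Uc \<in> sets cantor_mu"
  unfolding Uc_def using Ab_sets by auto

lemma Uc_meas: "measure cantor_mu Uc \<le> 2/3"
proof -
  interpret P: prob_space cantor_mu by (rule prob_cantor)
  have "measure cantor_mu Uc \<le> (\<Sum>j. measure cantor_mu (Ab j))"
    unfolding Uc_def
    by (rule P.finite_measure_subadditive_countably) (use Ab_sets geo in \<open>auto simp: Ab_meas\<close>)
  moreover have "(\<Sum>j. measure cantor_mu (Ab j)) = 2/3" using geo(2) by (simp only: Ab_meas)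
  ultimately show ?thesis by simp
qed

lemma cyl_restr: "cyl (restr x n) = {y. \<forall>i\<in>{..<n}. y i = x i}"
  by (auto simp: cyl_def restr_def)

lemma cyl_meas: "measure cantor_mu (cyl (restr x n)) = (1/2)^n"
  unfolding cyl_restr by (subst fix_meas) auto

lemma in_Uc_dens: assumes "x \<in> Uc" shows "x \<in> Phi Uc"
proof -
  from assms obtain j where j: "x \<in> Ab j" unfolding Uc_def by auto
  have "eventually (\<lambda>n. measure cantor_mu (Uc \<inter> cyl (restr x n)) / measure cantor_mu (cyl (restr x n)) = 1) sequentially"
    unfolding eventually_sequentially
  proof (intro exI allI impI)
    fix n assume n: "(Suc j)^2 \<le> n"
    have "cyl (restr x n) \<subseteq> Ab j"
    proof
      fix y assume "y \<in> cyl (restr x n)"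
      then have "\<forall>i<n. y i = x i" by (simp add: cyl_restr)
      have "i < n" if "i \<in> blk j" for i using blk_lt[OF that] n by linarith
      then show "y \<in> Ab j" using j \<open>\<forall>i<n. y i = x i\<close> unfolding Ab_def by auto
    qed
    then have "Uc \<inter> cyl (restr x n) = cyl (restr x n)" unfolding Uc_def by auto
    then show "measure cantor_mu (Uc \<inter> cyl (restr x n)) / measure cantor_mu (cyl (restr x n)) = 1"
      by (simp add: cyl_meas)
  qed
  then show ?thesis unfolding Phi_def by (auto intro: tendsto_eventually)
qed

lemma notin_Uc_bound: assumes "x \<notin> Uc"
  shows "measure cantor_mu (Uc \<inter> cyl (restr x ((Suc k)^2))) / measure cantor_mu (cyl (restr x ((Suc k)^2))) \<le> 2/3"
proof -
  interpret P: prob_space cantor_mu by (rule prob_cantor)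
  define n where "n = (Suc k)^2"
  define C where "C j = cyl (restr x n) \<inter> Ab j" for j
  have Cs: "C j \<in> sets cantor_mu" for j
    unfolding C_def cyl_restr using Ab_sets fix_sets[of "{..<n}" x] by auto
  have Cb: "measure cantor_mu (C j) \<le> (1/2)^n * (1/2)^(2*j+1)" for j
  proof (cases "j \<le> k")
    case True
    have "C j = {}"
    proof (rule ccontr)
      assume "C j \<noteq> {}"
      then obtain y where y: "y \<in> C j" by auto
      have "i < n" if "i \<in> blk j" for i
        using blk_lt[OF that] sq_mono[of "Suc j" "Suc k"] True unfolding n_def by linarith
      then have "blk j \<subseteq> {..<n}" by auto
      then have "x \<in> Ab j" using y unfolding C_def cyl_restr Ab_def by auto
      then show False using assms unfolding Uc_def by auto
    qed
    then show ?thesis by simp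
  next
    case False
    have "n \<le> i" if "i \<in> blk j" for i
      using blk_ge[OF that] sq_mono[of "Suc k" j] False unfolding n_def by linarith
    then have disj: "{..<n} \<inter> blk j = {}" by force
    define w where "w i = (if i < n then x i else False)" for i
    have "C j = {y. \<forall>i\<in>{..<n} \<union> blk j. y i = w i}"
      using disj unfolding C_def cyl_restr Ab_def w_def by auto
    moreover have "finite (blk j)" by (simp add: blk_def)
    ultimately have "measure cantor_mu (C j) = (1/2)^(card ({..<n} \<union> blk j))"
      by (simp add: fix_meas)
    also have "card ({..<n} \<union> blk j) = n + (2*j+1)"
      using disj \<open>finite (blk j)\<close> by (simp add: card_Un_disjoint card_blk)
    finally show ?thesis by (simp add: power_add)
  qed
  have sumC: "summable (\<lambda>j. measure cantor_mu (C j))"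
    by (rule summable_comparison_test'[where N=0, OF summable_mult[OF geo(1), of "(1/2)^n"]])
       (use Cb in auto)
  have UCs: "(\<Union>j. C j) \<in> sets cantor_mu" using Cs by auto
  have "measure cantor_mu (Uc \<inter> cyl (restr x n)) \<le> measure cantor_mu (\<Union>j. C j)"
    by (rule P.finite_measure_mono[OF _ UCs]) (auto simp: C_def Uc_def)
  also have "\<dots> \<le> (\<Sum>j. measure cantor_mu (C j))"
    by (rule P.finite_measure_subadditive_countably) (use Cs sumC in auto)
  also have "\<dots> \<le> (\<Sum>j. (1/2)^n * (1/2::real)^(2*j+1))"
    by (rule suminf_le) (use Cb sumC summable_mult[OF geo(1), of "(1/2)^n"] in auto)
  also have "\<dots> = (1/2)^n * (2/3)"
    by (subst suminf_mult[OF geo(1)]) (simp only: geo(2))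
  finally have le: "measure cantor_mu (Uc \<inter> cyl (restr x n)) \<le> 2/3 * (1/2)^n" by simp
  have pos: "(0::real) < (1/2)^n" by simp
  show ?thesis unfolding n_def[symmetric] cyl_meas using le pos by (simp only: pos_divide_le_eq)
qed

lemma Phi_Uc: "Phi Uc = Uc"
proof
  show "Uc \<subseteq> Phi Uc" using in_Uc_dens by auto
  show "Phi Uc \<subseteq> Uc"
  proof
    fix x assume x: "x \<in> Phi Uc"
    show "x \<in> Uc"
    proof (rule ccontr)
      assume nx: "x \<notin> Uc"
      from x have lim: "(\<lambda>n. measure cantor_mu (Uc \<inter> cyl (restr x n)) / measure cantor_mu (cyl (restr x n))) \<longlonglongrightarrow> 1"
        unfolding Phi_def by simp
      have "eventually (\<lambda>n. 2/3 < measure cantor_mu (Uc \<inter> cyl (restr x n)) / measure cantor_mu (cyl (restr x n))) sequentially"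
        by (rule order_tendstoD(1)[OF lim]) simp
      then obtain N where N: "\<And>n. n \<ge> N \<Longrightarrow> 2/3 < measure cantor_mu (Uc \<inter> cyl (restr x n)) / measure cantor_mu (cyl (restr x n))"
        unfolding eventually_sequentially by auto
      have "(Suc N)^2 \<ge> N" using le_sq[of "Suc N"] by linarith
      from N[OF this] notin_Uc_bound[OF nx, of N] show False by simp
    qed
  qed
qed

lemma open_Uc: "open Uc"
proof -
  have "open (Ab j)" for j
  proof -
    have "open {f::nat\<Rightarrow>bool. \<forall>i\<in>blk j. f ((\<lambda>i. i) i) \<in> {False}}"
      by (rule product_topology_basis') (simp_all add: blk_def discrete_topology_class.open_discrete)
    moreover have "{f::nat\<Rightarrow>bool. \<forall>i\<in>blk j. f ((\<lambda>i. i) i) \<in> {False}} = Ab j"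
      by (auto simp: Ab_def)
    ultimately show ?thesis by simp
  qed
  then show ?thesis unfolding Uc_def by auto
qed

lemma closure_Uc: "closure Uc = UNIV"
proof -
  have "x \<in> closure Uc" for x
    unfolding closure_iff_nhds_not_empty
  proof (intro allI impI)
    fix A S assume SA: "S \<subseteq> A" and oS: "open S" and xS: "x \<in> S"
    from oS have "openin (product_topology (\<lambda>i. euclidean) UNIV) S" by (simp only: open_fun_def)
    from this[unfolded openin_product_topology_alt, rule_format, OF xS]
    obtain U where U: "finite {i \<in> UNIV. U i \<noteq> topspace euclidean}" "x \<in> Pi\<^sub>E UNIV U" "Pi\<^sub>E UNIV U \<subseteq> S"
      by blast
    have U1: "finite {i. U i \<noteq> UNIV}" using U(1) by simp
    from finite_nat_bounded[OF U1] obtain N where N: "{i. U i \<noteq> UNIV} \<subseteq> {..<N}" by auto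
    define y where "y i = (if i \<in> blk N then False else x i)" for i
    have "y \<in> Ab N" unfolding y_def Ab_def by auto
    moreover have "y \<in> Pi\<^sub>E UNIV U"
    proof -
      have "y i \<in> U i" for i
      proof (cases "i \<in> blk N")
        case True
        then have "i \<ge> N" using blk_ge[of i N] le_sq[of N] by linarith
        then have "U i = UNIV" using N by auto
        then show ?thesis by simp
      next
        case False then show ?thesis using U(2) by (simp add: y_def PiE_iff)
      qed
      then show ?thesis by (simp add: PiE_iff)
    qed
    ultimately show "Uc \<inter> A \<noteq> {}" using U(3) SA unfolding Uc_def by blast
  qed
  then show ?thesis by auto
qed

theorem corollary7p2:
  shows "\<exists>U :: (nat \<Rightarrow> bool) set. open U \<and> Phi U = U \<and>
           frontier U \<in> sets cantor_mu \<and> measure cantor_mu (frontier U) > 0"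
proof (intro exI conjI)
  interpret P: prob_space cantor_mu by (rule prob_cantor)
  have fr: "frontier Uc = space cantor_mu - Uc"
    by (simp add: frontier_def closure_Uc interior_open open_Uc space_cantor Compl_eq_Diff_UNIV)
  show "open Uc" by (rule open_Uc)
  show "Phi Uc = Uc" by (rule Phi_Uc)
  show "frontier Uc \<in> sets cantor_mu" unfolding fr using Uc_sets by auto
  show "measure cantor_mu (frontier Uc) > 0" unfolding fr
    using P.prob_compl[OF Uc_sets] Uc_meas by simp
qed

end
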